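(* Let $m,n\geq 2$. There does not exist a Borel-Turing computable function $G:\mathbb{C}^{m\times n}\to\mathbb{C}^{n\times m}$ such that, setting $A_0=G(A)$ and $A_k=2A_{k-1}-A_{k-1}AA_{k-1}$ for $k\in\mathbb{N}$, the sequence $(A_k)_{k}$ converges effectively to $A^\dagger$, i.e., such that there exists a recursive function $e:\mathbb{N}\to\mathbb{N}$ with $\|A^\dagger-A_k\|_2\le 2^{-N}$ for every (computable) $A\in\mathbb{C}^{m\times n}$, every $N\in\mathbb{N}$ and every $k\ge e(N)$.
   Context: $A^\dagger\in\mathbb{C}^{n\times m}$ is the Moore–Penrose pseudoinverse of $A\in\mathbb{C}^{m\times n}$ (the unique matrix with $AA^\dagger A=A$, $A^\dagger AA^\dagger=A^\dagger$, $(AA^\dagger)^H=AA^\dagger$, $(A^\dagger A)^H=A^\dagger A$); $\|\cdot\|_2$ is the spectral norm. A real number $x$ is computable if there is a sequence $r_k=(-1)^{s(k)}a(k)/b(k)$ with recursive $a,b,s$, $b(k)\ne0$, such that $|r_k-x|\le2^{-k}$ for all $k$; such a sequence is a representation of $x$. Complex numbers/matrices are computable if the real and imaginary parts of all entries are; a representation of such an object consists of representations of these parts. A function $G$ defined on computable inputs with computable outputs is Borel-Turing computable if there is a Turing machine that transforms each representation of any input $x$ into a representation of $G(x)$. *)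

theory Defs
  imports "HOL-Analysis.Analysis" "HOL-Library.Countable"
begin

section \<open>Oracle mu-recursive functions (model of Turing machines with input tape)\<close>

datatype rf = Zr | Sc | Proj nat | Comp rf "rf list" | Prim rf rf | Mn rf | Orc

definition arg :: "nat list \<Rightarrow> nat \<Rightarrow> nat" where
  "arg xs i = (if i < length xs then xs ! i else 0)"

inductive eval :: "(nat \<Rightarrow> nat) \<Rightarrow> rf \<Rightarrow> nat list \<Rightarrow> nat \<Rightarrow> bool" for f where
  ev_zero: "eval f Zr xs 0"
| ev_succ: "eval f Sc xs (Suc (arg xs 0))"
| ev_proj: "eval f (Proj i) xs (arg xs i)"
| ev_orc:  "eval f Orc xs (f (arg xs 0))"
| ev_comp: "length ys = length hs \<Longrightarrow> (\<forall>i<length hs. eval f (hs ! i) xs (ys ! i))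
            \<Longrightarrow> eval f g ys z \<Longrightarrow> eval f (Comp g hs) xs z"
| ev_prim0: "eval f g xs y \<Longrightarrow> eval f (Prim g h) (0 # xs) y"
| ev_primS: "eval f (Prim g h) (n # xs) y \<Longrightarrow> eval f h (n # y # xs) z
            \<Longrightarrow> eval f (Prim g h) (Suc n # xs) z"
| ev_mn: "eval f g (n # xs) 0 \<Longrightarrow> (\<forall>m<n. \<exists>y. eval f g (m # xs) y \<and> y \<noteq> 0)
            \<Longrightarrow> eval f (Mn g) xs n"

fun no_orc :: "rf \<Rightarrow> bool" where
  "no_orc Orc = False"
| "no_orc (Comp g hs) = (no_orc g \<and> (\<forall>h\<in>set hs. no_orc h))"
| "no_orc (Prim g h) = (no_orc g \<and> no_orc h)"
| "no_orc (Mn g) = no_orc g"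
| "no_orc _ = True"

definition recursive :: "(nat \<Rightarrow> nat) \<Rightarrow> bool" where
  "recursive e \<longleftrightarrow> (\<exists>p. no_orc p \<and> (\<forall>x. eval (\<lambda>_. 0) p [x] (e x)))"

definition rep_real :: "(nat \<Rightarrow> nat) \<Rightarrow> (nat \<Rightarrow> nat) \<Rightarrow> (nat \<Rightarrow> nat) \<Rightarrow> real \<Rightarrow> bool" where
  "rep_real a b s x \<longleftrightarrow> recursive a \<and> recursive b \<and> recursive s \<and> (\<forall>k. b k \<noteq> 0) \<and>
     (\<forall>k. \<bar>(-1) ^ s k * real (a k) / real (b k) - x\<bar> \<le> 2 powr (- real k))"

text \<open>Encoding of a representation of a matrix as one sequence (input tape):
  position  prod_encode (c, prod_encode (k, prod_encode (prod_encode (to_nat i, to_nat j), ri)))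
  holds the k-th term of component c (0 = a, 1 = b, 2 = s) of the representation of the
  real part (ri = 0) resp. imaginary part (ri = 1) of entry (i,j).\<close>
definition tape_pos :: "nat \<Rightarrow> nat \<Rightarrow> 'i::countable \<Rightarrow> 'j::countable \<Rightarrow> nat \<Rightarrow> nat" where
  "tape_pos c k i j ri = prod_encode (c, prod_encode (k, prod_encode (prod_encode (to_nat i, to_nat j), ri)))"

definition rep_mat :: "(nat \<Rightarrow> nat) \<Rightarrow> complex ^ 'c::finite ^ 'r::finite \<Rightarrow> bool" where
  "rep_mat f A \<longleftrightarrow> (\<forall>i j.
      rep_real (\<lambda>k. f (tape_pos 0 k i j 0)) (\<lambda>k. f (tape_pos 1 k i j 0)) (\<lambda>k. f (tape_pos 2 k i j 0))
               (Re (A $ i $ j)) \<and>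
      rep_real (\<lambda>k. f (tape_pos 0 k i j 1)) (\<lambda>k. f (tape_pos 1 k i j 1)) (\<lambda>k. f (tape_pos 2 k i j 1))
               (Im (A $ i $ j)))"

definition computable_mat :: "complex ^ 'c::finite ^ 'r::finite \<Rightarrow> bool" where
  "computable_mat A \<longleftrightarrow> (\<exists>f. rep_mat f A)"

definition BT_computable :: "(complex ^ 'n::finite ^ 'm::finite \<Rightarrow> complex ^ 'q::finite ^ 'p::finite) \<Rightarrow> bool" where
  "BT_computable G \<longleftrightarrow> (\<exists>p. \<forall>A f. rep_mat f A \<longrightarrow>
      (\<exists>g. (\<forall>x. eval f p [x] (g x)) \<and> rep_mat g (G A)))"

definition conj_transpose :: "complex ^ 'n ^ 'm \<Rightarrow> complex ^ 'm ^ 'n" where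
  "conj_transpose A = (\<chi> i j. cnj (A $ j $ i))"

definition pinv :: "complex ^ 'n::finite ^ 'm::finite \<Rightarrow> complex ^ 'm ^ 'n" where
  "pinv A = (THE X. A ** X ** A = A \<and> X ** A ** X = X \<and>
                    conj_transpose (A ** X) = A ** X \<and> conj_transpose (X ** A) = X ** A)"

definition spec_norm :: "complex ^ 'n::finite ^ 'm::finite \<Rightarrow> real" where
  "spec_norm A = onorm (\<lambda>x. A *v x)"

definition newton_iter :: "complex ^ 'n::finite ^ 'm::finite \<Rightarrow> complex ^ 'm ^ 'n \<Rightarrow> nat \<Rightarrow> complex ^ 'm ^ 'n" where
  "newton_iter A X0 k = ((\<lambda>X. X + X - X ** A ** X) ^^ k) X0"

end

theory Submission
  imports Defs
begin


lemma eval_use: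
  assumes "eval f p xs y"
  shows "\<exists>n. \<forall>f'. (\<forall>z<n. f' z = f z) \<longrightarrow> eval f' p xs y"
  using assms
proof (induction rule: eval.induct)
  case (ev_zero xs) then show ?case by (auto intro: eval.intros)
next
  case (ev_succ xs) then show ?case by (auto intro: eval.intros)
next
  case (ev_proj i xs) then show ?case by (auto intro: eval.intros)
next
  case (ev_orc xs)
  show ?case
  proof (intro exI allI impI)
    fix f' :: "nat \<Rightarrow> nat" assume "\<forall>z<Suc (arg xs 0). f' z = f z"
    then have "f' (arg xs 0) = f (arg xs 0)" by simp
    then show "eval f' Orc xs (f (arg xs 0))" by (metis eval.ev_orc)
  qed
next
  case (ev_comp ys hs xs g z)
  from ev_comp.IH obtain ng where ng: "\<forall>f'. (\<forall>z<ng. f' z = f z) \<longrightarrow> eval f' g ys z" by blast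
  have "\<forall>i\<in>{..<length hs}. \<exists>n. \<forall>f'. (\<forall>z<n. f' z = f z) \<longrightarrow> eval f' (hs ! i) xs (ys ! i)"
    using ev_comp.IH by blast
  then obtain N where N: "\<And>i. i < length hs \<Longrightarrow> \<forall>f'. (\<forall>z<N i. f' z = f z) \<longrightarrow> eval f' (hs ! i) xs (ys ! i)"
    by (metis lessThan_iff)
  show ?case
  proof (intro exI allI impI)
    fix f' :: "nat \<Rightarrow> nat" assume a: "\<forall>z<ng + (\<Sum>i<length hs. N i). f' z = f z"
    have "\<forall>i<length hs. eval f' (hs ! i) xs (ys ! i)"
    proof (intro allI impI)
      fix i assume i: "i < length hs"
      have "N i \<le> (\<Sum>i<length hs. N i)" using i by (intro member_le_sum) auto
      then show "eval f' (hs ! i) xs (ys ! i)" using N[OF i] a by auto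
    qed
    moreover have "eval f' g ys z" using ng a by auto
    ultimately show "eval f' (Comp g hs) xs z" using ev_comp.hyps(1) by (metis eval.ev_comp)
  qed
next
  case (ev_prim0 g xs y h)
  then obtain n where "\<forall>f'. (\<forall>z<n. f' z = f z) \<longrightarrow> eval f' g xs y" by blast
  then show ?case by (meson eval.ev_prim0)
next
  case (ev_primS g h n xs y z)
  from ev_primS.IH obtain n1 n2 where
    "\<forall>f'. (\<forall>z<n1. f' z = f z) \<longrightarrow> eval f' (Prim g h) (n # xs) y"
    "\<forall>f'. (\<forall>za<n2. f' za = f za) \<longrightarrow> eval f' h (n # y # xs) z" by blast
  note A = this
  show ?case
  proof (intro exI[of _ "n1 + n2"] allI impI)
    fix f' :: "nat \<Rightarrow> nat" assume a: "\<forall>z<n1 + n2. f' z = f z"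
    have "eval f' (Prim g h) (n # xs) y" using A(1) a by auto
    moreover have "eval f' h (n # y # xs) z" using A(2) a by auto
    ultimately show "eval f' (Prim g h) (Suc n # xs) z" by (rule eval.ev_primS)
  qed
next
  case (ev_mn g n xs)
  from ev_mn.IH(1) obtain n0 where n0: "\<forall>f'. (\<forall>z<n0. f' z = f z) \<longrightarrow> eval f' g (n # xs) 0" by blast
  have "\<forall>m\<in>{..<n}. \<exists>k y. y \<noteq> 0 \<and> (\<forall>f'. (\<forall>z<k. f' z = f z) \<longrightarrow> eval f' g (m # xs) y)"
    using ev_mn.IH(2) by blast
  then obtain K Y where KY: "\<And>m. m < n \<Longrightarrow> Y m \<noteq> 0 \<and> (\<forall>f'. (\<forall>z<K m. f' z = f z) \<longrightarrow> eval f' g (m # xs) (Y m))"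
    by (metis lessThan_iff)
  show ?case
  proof (intro exI allI impI)
    fix f' :: "nat \<Rightarrow> nat" assume a: "\<forall>z<n0 + (\<Sum>i<n. K i). f' z = f z"
    have "\<forall>m<n. \<exists>y. eval f' g (m # xs) y \<and> y \<noteq> 0"
    proof (intro allI impI)
      fix m assume m: "m < n"
      have "K m \<le> (\<Sum>i<n. K i)" using m by (intro member_le_sum) auto
      then have "eval f' g (m # xs) (Y m)" using KY[OF m] a by auto
      then show "\<exists>y. eval f' g (m # xs) y \<and> y \<noteq> 0" using KY[OF m] by blast
    qed
    moreover have "eval f' g (n # xs) 0" using n0 a by auto
    ultimately show "eval f' (Mn g) xs n" by (metis eval.ev_mn)
  qed
qed

lemma eval_det:
  assumes "eval f p xs y"
  shows "eval f p xs y' \<Longrightarrow> y' = y"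
  using assms
proof (induction arbitrary: y' rule: eval.induct)
  case (ev_comp ys hs xs g z)
  from ev_comp.prems obtain ys' where 1: "length ys' = length hs"
    "\<forall>i<length hs. eval f (hs ! i) xs (ys' ! i)" "eval f g ys' y'"
    by (cases rule: eval.cases) auto
  have "ys' = ys"
    using 1 ev_comp.IH ev_comp.hyps by (auto intro: nth_equalityI)
  then show ?case using 1 ev_comp.IH by auto
next
  case (ev_prim0 g xs y h)
  from ev_prim0.prems show ?case
    by (cases rule: eval.cases) (auto simp: ev_prim0.IH)
next
  case (ev_primS g h n xs y z)
  from ev_primS.prems obtain y1 where "eval f (Prim g h) (n # xs) y1" "eval f h (n # y1 # xs) y'"
    by (cases rule: eval.cases) auto
  then show ?case using ev_primS.IH by auto
next
  case (ev_mn g n xs)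
  from ev_mn.prems have 1: "eval f g (y' # xs) 0" "\<forall>m<y'. \<exists>y. eval f g (m # xs) y \<and> y \<noteq> 0"
    by (cases rule: eval.cases; auto)+
  show ?case
  proof (rule ccontr)
    assume "y' \<noteq> n"
    then consider "y' < n" | "n < y'" by linarith
    then show False
    proof cases
      case 1
      then show False using ev_mn.IH(2) \<open>eval f g (y' # xs) 0\<close> by fastforce
    next
      case 2
      then show False using 1(2) ev_mn.IH(1) by fastforce
    qed
  qed
qed (auto elim: eval.cases)



fun cst :: "nat \<Rightarrow> rf" where
  "cst 0 = Zr" | "cst (Suc c) = Comp Sc [cst c]"

lemma cst_eval: "eval f (cst c) xs c"
proof (induction c)
  case 0 then show ?case by (simp add: eval.ev_zero)
next
  case (Suc c)
  have "eval f Sc [c] (Suc c)" using eval.ev_succ[of f "[c]"] by (simp add: arg_def)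
  then show ?case using Suc by (auto intro!: eval.ev_comp[where ys="[c]"])
qed

lemma cst_no_orc: "no_orc (cst c)" by (induction c) auto

definition predp :: rf where "predp = Prim Zr (Proj 0)"

lemma predp_eval: "eval f predp [k] (k - 1)"
proof (induction k)
  case 0 then show ?case unfolding predp_def by (auto intro: eval.intros)
next
  case (Suc k)
  have "eval f (Proj 0) [k, k - 1] k" using eval.ev_proj[of f 0 "[k, k-1]"] by (simp add: arg_def)
  then show ?case using Suc unfolding predp_def by (auto intro: eval.ev_primS)
qed

fun subM :: "nat \<Rightarrow> rf" where
  "subM 0 = Proj 0" | "subM (Suc M) = Comp predp [subM M]"

lemma subM_eval: "eval f (subM M) [k] (k - M)"
proof (induction M)
  case 0 then show ?case using eval.ev_proj[of f 0 "[k]"] by (simp add: arg_def)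
next
  case (Suc M)
  have "eval f predp [k - M] (k - Suc M)" using predp_eval[of f "k - M"] by simp
  then show ?case using Suc by (auto intro!: eval.ev_comp[where ys="[k - M]"])
qed

lemma subM_no_orc: "no_orc (subM M)" by (induction M) (auto simp: predp_def)

lemma sel_eval: "eval f (Prim (cst c1) (cst c2)) [d] (if d = 0 then c1 else c2)"
proof (induction d)
  case 0 then show ?case by (auto intro: eval.intros cst_eval)
next
  case (Suc d)
  then show ?case by (auto intro: eval.ev_primS cst_eval)
qed

lemma recursive_step: "recursive (\<lambda>k. if M < k then c2 else c1)"
  unfolding recursive_def
proof (intro exI conjI allI)
  show "no_orc (Comp (Prim (cst c1) (cst c2)) [subM M])"
    by (simp add: cst_no_orc subM_no_orc)
  fix x
  have "eval (\<lambda>_. 0) (Prim (cst c1) (cst c2)) [x - M] (if M < x then c2 else c1)"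
    using sel_eval[of "\<lambda>_. 0" c1 c2 "x - M"] by (simp split: if_splits)
  then show "eval (\<lambda>_. 0) (Comp (Prim (cst c1) (cst c2)) [subM M]) [x] (if M < x then c2 else c1)"
    using subM_eval[of "\<lambda>_. 0" M x] by (auto intro!: eval.ev_comp[where ys="[x - M]"])
qed

lemma recursive_const: "recursive (\<lambda>k. c)"
  unfolding recursive_def using cst_eval cst_no_orc by blast

definition frep :: "bool \<Rightarrow> nat \<Rightarrow> 'i::countable \<Rightarrow> 'j::countable \<Rightarrow> nat \<Rightarrow> nat" where
  "frep act M i0 j0 x = (let c = fst (prod_decode x); r = snd (prod_decode x);
      k = fst (prod_decode r); ij = fst (prod_decode (snd (prod_decode r)));
      ri = snd (prod_decode (snd (prod_decode r))) in
      if act \<and> ij = prod_encode (to_nat i0, to_nat j0) \<and> ri = 0 \<and> M < k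
      then (if c = 0 then 1 else if c = 1 then 2^M else 0) else (if c = 1 then 1 else 0))"

lemma frep_tape: "frep act M i0 j0 (tape_pos c k i j ri) =
  (if act \<and> i = i0 \<and> j = j0 \<and> ri = 0 \<and> M < k
      then (if c = 0 then 1 else if c = 1 then 2^M else 0) else (if c = 1 then 1 else 0))"
  by (simp add: frep_def tape_pos_def Let_def prod_encode_eq)

lemma frep_agree:
  assumes "x \<le> M" shows "frep True M i0 j0 x = frep False 0 i0 j0 x"
proof -
  have "snd (prod_decode x) \<le> x"
    by (metis le_prod_encode_2 prod.collapse prod_decode_inverse)
  moreover have "fst (prod_decode (snd (prod_decode x))) \<le> snd (prod_decode x)"
    by (metis le_prod_encode_1 prod.collapse prod_decode_inverse)
  ultimately show ?thesis using assms unfolding frep_def Let_def by auto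
qed

lemma rep_real_zero: "rep_real (\<lambda>k. 0) (\<lambda>k. 1) (\<lambda>k. 0) 0"
  unfolding rep_real_def by (simp add: recursive_const)

lemma rep_real_eps: "rep_real (\<lambda>k. if M < k then 1 else 0) (\<lambda>k. if M < k then 2^M else 1) (\<lambda>k. 0) ((1/2)^M)"
  unfolding rep_real_def
proof (intro conjI allI)
  fix k
  show "\<bar>(- 1) ^ 0 * real (if M < k then 1 else 0) / real (if M < k then 2 ^ M else 1) - (1 / 2) ^ M\<bar>
         \<le> 2 powr - real k"
  proof (cases "M < k")
    case True then show ?thesis by (simp add: power_one_over)
  next
    case False
    have "(1/2::real)^M \<le> (1/2)^k" using False by (intro power_decreasing) auto
    then show ?thesis using False by (simp add: powr_minus powr_realpow power_one_over inverse_eq_divide)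
  qed
qed (auto intro: recursive_step recursive_const)



lemma ct_mult: "conj_transpose (A ** B) = conj_transpose B ** conj_transpose (A :: complex^'n^'m)"
  by (simp add: vec_eq_iff conj_transpose_def matrix_matrix_mult_def mult.commute)

lemma ct_ct: "conj_transpose (conj_transpose A) = A"
  by (simp add: vec_eq_iff conj_transpose_def)

lemma mp_unique:
  fixes A :: "complex^'n^'m"
  assumes X1: "A ** X ** A = A" and X2: "X ** A ** X = X"
    and X3: "conj_transpose (A ** X) = A ** X" and X4: "conj_transpose (X ** A) = X ** A"
    and Y1: "A ** Y ** A = A" and Y2: "Y ** A ** Y = Y"
    and Y3: "conj_transpose (A ** Y) = A ** Y" and Y4: "conj_transpose (Y ** A) = Y ** A"
  shows "X = Y"
proof -
  let ?H = conj_transpose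
  have hA1: "?H A = ?H A ** (A ** Y)"
  proof -
    have "?H A = ?H ((A ** Y) ** A)" using Y1 by simp
    also have "\<dots> = ?H A ** ?H (A ** Y)" by (rule ct_mult)
    finally show ?thesis using Y3 by simp
  qed
  have hA2: "?H A = X ** A ** ?H A"
  proof -
    have "?H A = ?H (A ** (X ** A))" using X1 by (simp add: matrix_mul_assoc)
    also have "\<dots> = ?H (X ** A) ** ?H A" by (rule ct_mult)
    finally show ?thesis using X4 by simp
  qed
  have "X = X ** (A ** X)" using X2 by (simp add: matrix_mul_assoc)
  also have "\<dots> = X ** ?H (A ** X)" using X3 by simp
  also have "\<dots> = X ** (?H X ** ?H A)" by (simp add: ct_mult)
  also have "\<dots> = X ** (?H X ** (?H A ** (A ** Y)))" using hA1 by simp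
  also have "\<dots> = X ** ?H (A ** X) ** (A ** Y)" by (simp add: ct_mult matrix_mul_assoc)
  also have "\<dots> = X ** A ** Y" using X2 X3 by (simp add: matrix_mul_assoc)
  finally have 1: "X = X ** A ** Y" .
  have "Y = (Y ** A) ** Y" using Y2 by simp
  also have "\<dots> = ?H (Y ** A) ** Y" using Y4 by simp
  also have "\<dots> = ?H A ** ?H Y ** Y" by (simp add: ct_mult)
  also have "\<dots> = X ** A ** ?H A ** ?H Y ** Y" using hA2 by simp
  also have "\<dots> = X ** A ** ?H (Y ** A) ** Y" by (simp add: ct_mult matrix_mul_assoc)
  also have "\<dots> = X ** A ** (Y ** A ** Y)" using Y4 by (simp add: matrix_mul_assoc)
  also have "\<dots> = X ** A ** Y" using Y2 by simp
  finally show ?thesis using 1 by simp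
qed

lemma pinv_eqI:
  fixes A :: "complex^'n^'m"
  assumes "A ** X ** A = A" "X ** A ** X = X"
    "conj_transpose (A ** X) = A ** X" "conj_transpose (X ** A) = X ** A"
  shows "pinv A = X"
  unfolding pinv_def
  by (rule the_equality) (use assms mp_unique in blast)+


definition munit :: "'a \<Rightarrow> 'b \<Rightarrow> complex \<Rightarrow> complex^'b^'a" where
  "munit i0 j0 a = (\<chi> i j. if i = i0 \<and> j = j0 then a else 0)"

lemma munit_mult: "munit i0 j0 a ** munit j0 k0 b = munit i0 k0 (a * b)"
proof -
  have e: "(\<lambda>l. (if i = i0 \<and> l = j0 then a else 0) * (if l = j0 \<and> k = k0 then b else 0))
     = (\<lambda>l. if l = j0 then (if i = i0 \<and> k = k0 then a * b else 0) else 0)" for i k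
    by auto
  show ?thesis
    unfolding vec_eq_iff munit_def matrix_matrix_mult_def
    by (simp only: vec_lambda_beta e sum.delta finite UNIV_I if_True) auto
qed

lemma munit_ct: "conj_transpose (munit i0 j0 a) = munit j0 i0 (cnj a)"
  by (simp add: vec_eq_iff munit_def conj_transpose_def)


lemma pinv_munit:
  assumes "a \<noteq> 0" and "a \<in> \<real>"
  shows "pinv (munit i0 j0 a :: complex^'n^'m) = munit j0 i0 (inverse a)"
  apply (rule pinv_eqI)
  using assms by (auto simp: munit_mult munit_ct Reals_cnj_iff)

lemma spec_norm_ge: "norm (M $ i $ j) \<le> spec_norm (M :: complex^'n^'m)"
proof -
  have "norm ((M *v axis j 1) $ i) \<le> norm (M *v axis j 1)" by (rule Finite_Cartesian_Product.norm_nth_le)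
  also have "\<dots> \<le> onorm (\<lambda>x. M *v x) * norm (axis j (1::complex))"
    by (rule onorm) simp
  also have "\<dots> = spec_norm M"
  proof -
    have "axis j (1::complex) \<in> (Basis :: (complex^'n) set)"
      by (auto simp: Basis_vec_def Basis_complex_def)
    then show ?thesis by (simp add: spec_norm_def)
  qed
  finally show ?thesis
    by (simp add: matrix_vector_mult_def axis_def if_distrib cong: if_cong)
qed



lemma tendsto_mmult:
  fixes X :: "'z \<Rightarrow> complex^'n^'m" and Y :: "'z \<Rightarrow> complex^'k^'n"
  assumes "(X \<longlongrightarrow> a) F" "(Y \<longlongrightarrow> b) F"
  shows "((\<lambda>t. X t ** Y t) \<longlongrightarrow> a ** b) F"
proof (rule vec_tendstoI)
  fix i
  show "((\<lambda>t. (X t ** Y t) $ i) \<longlongrightarrow> (a ** b) $ i) F"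
  proof (rule vec_tendstoI)
    fix j
    have "((\<lambda>t. \<Sum>k\<in>UNIV. X t $ i $ k * Y t $ k $ j) \<longlongrightarrow> (\<Sum>k\<in>UNIV. a $ i $ k * b $ k $ j)) F"
    proof (rule tendsto_sum)
      fix k
      have 1: "((\<lambda>t. X t $ i $ k) \<longlongrightarrow> a $ i $ k) F"
        by (rule tendsto_vec_nth, rule tendsto_vec_nth, rule assms(1))
      have 2: "((\<lambda>t. Y t $ k $ j) \<longlongrightarrow> b $ k $ j) F"
        by (rule tendsto_vec_nth, rule tendsto_vec_nth, rule assms(2))
      show "((\<lambda>t. X t $ i $ k * Y t $ k $ j) \<longlongrightarrow> a $ i $ k * b $ k $ j) F"
        by (rule tendsto_mult[OF 1 2])
    qed
    then show "((\<lambda>t. (X t ** Y t) $ i $ j) \<longlongrightarrow> (a ** b) $ i $ j) F"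
      by (simp add: matrix_matrix_mult_def)
  qed
qed

lemma newton_iter_Suc: "newton_iter A X (Suc k) =
   newton_iter A X k + newton_iter A X k - newton_iter A X k ** A ** newton_iter A X k"
  by (simp add: newton_iter_def)

lemma tendsto_newton:
  assumes "(A \<longlongrightarrow> a) F" "(X \<longlongrightarrow> x) F"
  shows "((\<lambda>t. newton_iter (A t) (X t) k) \<longlongrightarrow> newton_iter a x k) F"
proof (induction k)
  case 0 then show ?case using assms by (simp add: newton_iter_def)
next
  case (Suc k)
  have "((\<lambda>t. newton_iter (A t) (X t) k ** A t ** newton_iter (A t) (X t) k) \<longlongrightarrow>
     newton_iter a x k ** a ** newton_iter a x k) F"
    by (rule tendsto_mmult[OF tendsto_mmult[OF Suc assms(1)] Suc])
  then show ?case unfolding newton_iter_Suc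
    by (rule tendsto_diff[OF tendsto_add[OF Suc Suc]])
qed

lemma conv_from_reps:
  assumes "\<And>M. rep_real (aM M) (bM M) (sM M) (v M)" "rep_real a b s v0"
    "\<And>L. \<exists>M0. \<forall>M\<ge>M0. aM M L = a L \<and> bM M L = b L \<and> sM M L = s L"
  shows "v \<longlonglongrightarrow> v0"
proof (rule LIMSEQ_I)
  fix r :: real assume r: "0 < r"
  obtain L where L: "(1/2::real)^L < r/2" using real_arch_pow_inv[of "r/2" "1/2::real"] r by auto
  obtain M0 where M0: "\<forall>M\<ge>M0. aM M L = a L \<and> bM M L = b L \<and> sM M L = s L" using assms(3) by blast
  have pw: "(2::real) powr - real L = (1/2)^L"
    by (simp add: powr_minus powr_realpow power_one_over inverse_eq_divide)
  show "\<exists>no. \<forall>n\<ge>no. norm (v n - v0) < r"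
  proof (intro exI allI impI)
    fix M assume "M0 \<le> M"
    then have e: "aM M L = a L" "bM M L = b L" "sM M L = s L" using M0 by auto
    let ?q = "(-1) ^ s L * real (a L) / real (b L)"
    have "\<forall>k. \<bar>(-1) ^ sM M k * real (aM M k) / real (bM M k) - v M\<bar> \<le> 2 powr - real k"
      using assms(1)[of M] unfolding rep_real_def by blast
    then have "\<bar>(-1) ^ sM M L * real (aM M L) / real (bM M L) - v M\<bar> \<le> 2 powr - real L" by blast
    then have 1: "\<bar>?q - v M\<bar> \<le> (1/2)^L" unfolding e pw .
    have "\<forall>k. \<bar>(-1) ^ s k * real (a k) / real (b k) - v0\<bar> \<le> 2 powr - real k"
      using assms(2) unfolding rep_real_def by blast
    then have 2: "\<bar>?q - v0\<bar> \<le> (1/2)^L" unfolding pw[symmetric] by blast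
    show "norm (v M - v0) < r" using 1 2 L by simp
  qed
qed



lemma rep_mat_F0: "rep_mat (frep False 0 (i0::'m) (j0::'n)) (0 :: complex^'n^'m)"
  unfolding rep_mat_def using rep_real_zero by (simp add: frep_tape)

lemma rep_mat_FM: "rep_mat (frep True M i0 j0) (munit i0 j0 (complex_of_real ((1/2)^M)) :: complex^'n^'m)"
  unfolding rep_mat_def
proof (intro allI)
  fix i :: 'm and j :: 'n
  show "rep_real (\<lambda>k. frep True M i0 j0 (tape_pos 0 k i j 0)) (\<lambda>k. frep True M i0 j0 (tape_pos 1 k i j 0))
          (\<lambda>k. frep True M i0 j0 (tape_pos 2 k i j 0)) (Re (munit i0 j0 (complex_of_real ((1 / 2) ^ M)) $ i $ j)) \<and>
        rep_real (\<lambda>k. frep True M i0 j0 (tape_pos 0 k i j 1)) (\<lambda>k. frep True M i0 j0 (tape_pos 1 k i j 1))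
          (\<lambda>k. frep True M i0 j0 (tape_pos 2 k i j 1)) (Im (munit i0 j0 (complex_of_real ((1 / 2) ^ M)) $ i $ j))"
  proof (cases "i = i0 \<and> j = j0")
    case True
    then show ?thesis unfolding frep_tape munit_def
      using rep_real_eps[of M] rep_real_zero by simp
  next
    case False
    then show ?thesis unfolding frep_tape munit_def
      using rep_real_zero by auto
  qed
qed



theorem corollary3p5:
  assumes "CARD('m::finite) \<ge> 2" and "CARD('n::finite) \<ge> 2"
  shows "\<not> (\<exists>G :: complex ^ 'n ^ 'm \<Rightarrow> complex ^ 'm ^ 'n.
            BT_computable G \<and>
            (\<exists>e. recursive e \<and>
               (\<forall>A :: complex ^ 'n ^ 'm. computable_mat A \<longrightarrow>
                  (\<forall>N k. k \<ge> e N \<longrightarrow>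
                     spec_norm (pinv A - newton_iter A (G A) k) \<le> 2 powr (- real N)))))"
proof
  assume "\<exists>G :: complex ^ 'n ^ 'm \<Rightarrow> complex ^ 'm ^ 'n.
            BT_computable G \<and>
            (\<exists>e. recursive e \<and>
               (\<forall>A :: complex ^ 'n ^ 'm. computable_mat A \<longrightarrow>
                  (\<forall>N k. k \<ge> e N \<longrightarrow>
                     spec_norm (pinv A - newton_iter A (G A) k) \<le> 2 powr (- real N))))"
  then obtain G :: "complex ^ 'n ^ 'm \<Rightarrow> complex ^ 'm ^ 'n" and e where BT: "BT_computable G"
    and H: "\<And>A :: complex ^ 'n ^ 'm. computable_mat A \<Longrightarrow>
                  (\<forall>N k. k \<ge> e N \<longrightarrow> spec_norm (pinv A - newton_iter A (G A) k) \<le> 2 powr (- real N))"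
    by blast
  from BT obtain p where P: "\<And>A f. rep_mat f A \<Longrightarrow> (\<exists>g. (\<forall>x. eval f p [x] (g x)) \<and> rep_mat g (G A))"
    unfolding BT_computable_def by blast
  define i0 :: 'm where "i0 = undefined"
  define j0 :: 'n where "j0 = undefined"
  define F0 where "F0 = frep False 0 i0 j0"
  define FM where "FM M = frep True M i0 j0" for M
  define AM where "AM M = (munit i0 j0 (complex_of_real ((1/2)^M)) :: complex^'n^'m)" for M
  have rF0: "rep_mat F0 (0 :: complex^'n^'m)" unfolding F0_def by (rule rep_mat_F0)
  have rFM: "rep_mat (FM M) (AM M)" for M unfolding FM_def AM_def by (rule rep_mat_FM)
  obtain g0 where g0: "\<forall>x. eval F0 p [x] (g0 x)" "rep_mat g0 (G 0)" using P[OF rF0] by blast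
  define gM where "gM M = (SOME g. (\<forall>x. eval (FM M) p [x] (g x)) \<and> rep_mat g (G (AM M)))" for M
  have gM: "(\<forall>x. eval (FM M) p [x] (gM M x)) \<and> rep_mat (gM M) (G (AM M))" for M
  proof -
    have "\<exists>g. (\<forall>x. eval (FM M) p [x] (g x)) \<and> rep_mat g (G (AM M))" by (rule P[OF rFM])
    then show ?thesis unfolding gM_def by (rule someI_ex)
  qed
  have agree: "\<exists>M0. \<forall>M\<ge>M0. gM M x = g0 x" for x
  proof -
    obtain n where n: "\<forall>f'. (\<forall>z<n. f' z = F0 z) \<longrightarrow> eval f' p [x] (g0 x)"
      using eval_use g0(1) by blast
    show ?thesis
    proof (intro exI allI impI)
      fix M assume "n \<le> M"
      then have "\<forall>z<n. FM M z = F0 z" by (simp add: FM_def F0_def frep_agree)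
      then have "eval (FM M) p [x] (g0 x)" using n by blast
      then show "gM M x = g0 x" using gM eval_det by blast
    qed
  qed
  have agree3: "\<exists>M0. \<forall>M\<ge>M0. gM M (tape_pos 0 L i j ri) = g0 (tape_pos 0 L i j ri) \<and>
      gM M (tape_pos 1 L i j ri) = g0 (tape_pos 1 L i j ri) \<and> gM M (tape_pos 2 L i j ri) = g0 (tape_pos 2 L i j ri)"
    for L and i :: 'n and j :: 'm and ri
  proof -
    obtain a where a: "\<forall>M\<ge>a. gM M (tape_pos 0 L i j ri) = g0 (tape_pos 0 L i j ri)" using agree by blast
    obtain b where b: "\<forall>M\<ge>b. gM M (tape_pos 1 L i j ri) = g0 (tape_pos 1 L i j ri)" using agree by blast
    obtain c where c: "\<forall>M\<ge>c. gM M (tape_pos 2 L i j ri) = g0 (tape_pos 2 L i j ri)" using agree by blast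
    show ?thesis by (rule exI[of _ "a + b + c"]) (use a b c in auto)
  qed
  have convG: "(\<lambda>M. G (AM M)) \<longlonglongrightarrow> G 0"
  proof (rule vec_tendstoI, rule vec_tendstoI)
    fix i :: 'n and j :: 'm
    have r0: "rep_real (\<lambda>k. g0 (tape_pos 0 k i j ri)) (\<lambda>k. g0 (tape_pos 1 k i j ri)) (\<lambda>k. g0 (tape_pos 2 k i j ri))
        (if ri = 0 then Re (G 0 $ i $ j) else Im (G 0 $ i $ j))" if "ri \<le> 1" for ri
      using g0(2) that unfolding rep_mat_def by (cases ri) auto
    have rM: "rep_real (\<lambda>k. gM M (tape_pos 0 k i j ri)) (\<lambda>k. gM M (tape_pos 1 k i j ri)) (\<lambda>k. gM M (tape_pos 2 k i j ri))
        (if ri = 0 then Re (G (AM M) $ i $ j) else Im (G (AM M) $ i $ j))" if "ri \<le> 1" for ri M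
      using gM[of M] that unfolding rep_mat_def by (cases ri) auto
    have "(\<lambda>M. if ri = 0 then Re (G (AM M) $ i $ j) else Im (G (AM M) $ i $ j)) \<longlonglongrightarrow>
          (if ri = 0 then Re (G 0 $ i $ j) else Im (G 0 $ i $ j))" if "ri \<le> 1" for ri :: nat
      by (rule conv_from_reps[OF rM[OF that] r0[OF that] agree3])
    from this[of 0] this[of 1]
    show "(\<lambda>M. G (AM M) $ i $ j) \<longlonglongrightarrow> G 0 $ i $ j"
      unfolding tendsto_complex_iff by simp
  qed
  have convA: "AM \<longlonglongrightarrow> 0"
  proof (rule vec_tendstoI, rule vec_tendstoI)
    fix i :: 'm and j :: 'n
    have "(\<lambda>M. complex_of_real ((1/2)^M)) \<longlonglongrightarrow> complex_of_real 0"
      by (intro tendsto_of_real LIMSEQ_realpow_zero) auto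
    then show "(\<lambda>M. AM M $ i $ j) \<longlonglongrightarrow> (0::complex^'n^'m) $ i $ j"
      by (cases "i = i0 \<and> j = j0") (auto simp: AM_def munit_def)
  qed
  define K where "K = e 0"
  define Y where "Y M = newton_iter (AM M) (G (AM M)) K" for M
  have convY: "Y \<longlonglongrightarrow> newton_iter 0 (G 0) K"
    unfolding Y_def by (rule tendsto_newton[OF convA convG])
  obtain M1 where M1: "\<forall>M\<ge>M1. norm (Y M - newton_iter 0 (G 0) K) < 1"
    using LIMSEQ_D[OF convY, of 1] by auto
  define C where "C = norm (newton_iter 0 (G 0) K) + 1"
  obtain n2 where n2: "C + 1 < 2 ^ n2" using real_arch_pow[of "2::real" "C + 1"] by auto
  define M where "M = max M1 n2"
  have YC: "norm (Y M) \<le> C"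
  proof -
    have "norm (Y M - newton_iter 0 (G 0) K) < 1" using M1 unfolding M_def by simp
    then show ?thesis using norm_triangle_ineq2[of "Y M" "newton_iter 0 (G 0) K"] unfolding C_def by linarith
  qed
  have comp: "computable_mat (AM M)" using rFM unfolding computable_mat_def by blast
  have sn: "spec_norm (pinv (AM M) - Y M) \<le> 1"
    using H[OF comp, rule_format, of 0 "e 0"] unfolding Y_def K_def by simp
  have pv: "pinv (AM M) = munit j0 i0 (complex_of_real (2^M))"
    unfolding AM_def by (subst pinv_munit) (auto simp: power_one_over)
  have "norm (complex_of_real (2^M) - Y M $ j0 $ i0) \<le> 1"
    using spec_norm_ge[of "pinv (AM M) - Y M" j0 i0] sn by (simp add: pv munit_def)
  moreover have "norm (Y M $ j0 $ i0) \<le> C"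
    using YC Finite_Cartesian_Product.norm_nth_le[of "Y M $ j0" i0] Finite_Cartesian_Product.norm_nth_le[of "Y M" j0]
    by linarith
  moreover have "norm (complex_of_real (2^M)) = 2^M" by (simp only: norm_of_real) simp
  ultimately have "(2::real)^M \<le> 1 + C"
    using norm_triangle_ineq2[of "complex_of_real (2^M)" "Y M $ j0 $ i0"] by (smt (verit) norm_minus_commute)
  moreover have "(2::real)^n2 \<le> 2^M" unfolding M_def by (intro power_increasing) auto
  ultimately show False using n2 by linarith
qed


end
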